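(* Let $U\ge 1$ and $k\ge U$ be integers with $k$ a multiple of $U$. Let $(n(i))_{i\ge 0}$ be defined by: - $n(0)=1$; - $n(i)=\sum_{m=0}^{i-1}n(m)$ for $1\le i\le U$; - $n(i)=\sum_{m=1}^{i-1}n(m)$ for $U<i\le k$; - $n(i)=\sum_{m=i-k}^{i-1}n(m)$ for $i>k$. (This recurrence counts the peers newly reached at delay $i$ in the multiple-unbalanced-tree chunk distribution.) Then for all integers $i\ge 1$, $$n(i)=\sum_{j=1}^{U}F_k(i-j+1),$$ and consequently, for every integer $t\ge 0$, $$\sum_{i=1}^{t}n(i)=\sum_{j=1}^{U}S_k(t-j+1)=\overline{N}(t).$$
   Context: $F_k(i)=0$ for $i\le 0$, $F_k(1)=1$, and $F_k(i)=\sum_{j=1}^k F_k(i-j)$ for $i>1$ (the $k$-step Fibonacci sequence). $S_k(n)=0$ for $n\le 0$ and $S_k(n)=\sum_{i=1}^n F_k(i)$ for $n>0$. $\overline{N}(t)=\sum_{j=1}^{U}S_k(t-j+1)$ is the upper bound on the stream diffusion metric for chunk-based streaming with normalized upload capacity $U$ and at most $k$ neighbors per node. *)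

theory Defs
  imports Main
begin

fun Fnat :: "nat \<Rightarrow> nat \<Rightarrow> nat" where
  "Fnat k 0 = 0"
| "Fnat k (Suc 0) = 1"
| "Fnat k (Suc (Suc m)) = (\<Sum>j\<in>{1..k}. if j \<le> Suc (Suc m) then Fnat k (Suc (Suc m) - j) else 0)"

definition F :: "nat \<Rightarrow> int \<Rightarrow> nat" where
  "F k i = (if i \<le> 0 then 0 else Fnat k (nat i))"

definition S :: "nat \<Rightarrow> int \<Rightarrow> nat" where
  "S k n = (if n \<le> 0 then 0 else (\<Sum>i\<in>{1..n}. F k i))"

definition Nbar :: "nat \<Rightarrow> nat \<Rightarrow> int \<Rightarrow> nat" where
  "Nbar k U t = (\<Sum>j\<in>{1..int U}. S k (t - j + 1))"

end

theory Submission
  imports Defs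
begin

lemma F_nonpos: "x \<le> 0 \<Longrightarrow> F k x = 0" by (simp add: F_def)

lemma sum_int_nat: "(\<Sum>l\<in>{1..int k}. f l) = (\<Sum>j\<in>{1..k}. f (int j))"
proof -
  have "{1..int k} = int ` {1..k}" by (simp add: image_int_atLeastAtMost)
  thus ?thesis by (simp add: sum.reindex)
qed

lemma F_rec: "F k m = (if m = 1 then 1 else 0) + (\<Sum>l\<in>{1..int k}. F k (m - l))"
proof (cases "m \<le> 1")
  case True
  have "(\<Sum>l\<in>{1..int k}. F k (m - l)) = 0"
    using True by (intro sum.neutral) (simp add: F_nonpos)
  thus ?thesis using True by (auto simp: F_def)
next
  case False
  then obtain m' where mm: "m = int (Suc (Suc m'))" by (metis add_2_eq_Suc' nat_int zless_iff_Suc_zadd zle_iff_zadd le_less_linear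
      one_add_one nat_less_iff of_nat_Suc)
  have h: "nat m = Suc (Suc m')" using mm by simp
  have h2: "nat (2 + int m') = Suc (Suc m')" by simp
  have "F k m = Fnat k (Suc (Suc m'))" unfolding F_def using False h by (simp del: Fnat.simps)
  also have "\<dots> = (\<Sum>j\<in>{1..k}. F k (m - int j))"
    unfolding Fnat.simps
  proof (rule sum.cong[OF refl])
    fix j assume "j \<in> {1..k}"
    show "(if j \<le> Suc (Suc m') then Fnat k (Suc (Suc m') - j) else 0) = F k (m - int j)"
      using mm by (cases "j = Suc (Suc m')") (auto simp: F_def nat_diff_distrib h2)
  qed
  also have "\<dots> = (\<Sum>l\<in>{1..int k}. F k (m - l))" by (simp add: sum_int_nat)
  finally show ?thesis using False by simp
qed

definition G :: "nat \<Rightarrow> nat \<Rightarrow> int \<Rightarrow> nat" where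
  "G k U i = (\<Sum>j\<in>{1..int U}. F k (i - j + 1))"

lemma G_nonpos: "i \<le> 0 \<Longrightarrow> G k U i = 0"
  unfolding G_def by (intro sum.neutral) (simp add: F_nonpos)

lemma G_rec: "G k U i = (if 1 \<le> i \<and> i \<le> int U then 1 else 0) + (\<Sum>l\<in>{1..int k}. G k U (i - l))"
proof -
  have "G k U i = (\<Sum>j\<in>{1..int U}. (if i - j + 1 = 1 then 1 else 0) + (\<Sum>l\<in>{1..int k}. F k (i - j + 1 - l)))"
    unfolding G_def by (rule sum.cong[OF refl], rule F_rec)
  also have "\<dots> = (\<Sum>j\<in>{1..int U}. (if i - j + 1 = 1 then 1 else 0)) + (\<Sum>j\<in>{1..int U}. \<Sum>l\<in>{1..int k}. F k (i - j + 1 - l))"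
    by (simp add: sum.distrib)
  also have "(\<Sum>j\<in>{1..int U}. (if i - j + 1 = 1 then 1 else 0::nat)) = (if 1 \<le> i \<and> i \<le> int U then 1 else 0)"
  proof -
    have "(\<Sum>j\<in>{1..int U}. (if i - j + 1 = 1 then 1 else 0::nat)) = (\<Sum>j\<in>{1..int U}. (if j = i then 1 else 0))"
      by (rule sum.cong) auto
    also have "\<dots> = (if 1 \<le> i \<and> i \<le> int U then 1 else 0)" by (simp add: sum.delta)
    finally show ?thesis .
  qed
  also have "(\<Sum>j\<in>{1..int U}. \<Sum>l\<in>{1..int k}. F k (i - j + 1 - l)) = (\<Sum>l\<in>{1..int k}. G k U (i - l))"
    unfolding G_def by (subst sum.swap) (simp add: algebra_simps)
  finally show ?thesis .
qed

lemma G_window: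
  assumes "1 \<le> i"
  shows "(\<Sum>l\<in>{1..int k}. G k U (int i - l)) = (\<Sum>m\<in>{max 1 (i-k)..i-1}. G k U (int m))"
proof -
  have "(\<Sum>l\<in>{1..int k}. G k U (int i - l)) = (\<Sum>x\<in>{int i - int k..int i - 1}. G k U x)"
  proof -
    have "{int i - int k..int i - 1} = (\<lambda>l. int i - l) ` {1..int k}"
    proof (rule set_eqI, rule iffI)
      fix x assume "x \<in> {int i - int k..int i - 1}"
      hence "int i - x \<in> {1..int k}" "x = int i - (int i - x)" by auto
      thus "x \<in> (\<lambda>l. int i - l) ` {1..int k}" by blast
    qed auto
    moreover have "inj_on (\<lambda>l. int i - l) {1..int k}" by (auto simp: inj_on_def)
    hence "sum (G k U) ((\<lambda>l. int i - l) ` {1..int k}) = sum (G k U \<circ> (\<lambda>l. int i - l)) {1..int k}"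
      by (rule sum.reindex)
    ultimately show ?thesis by simp
  qed
  also have "\<dots> = (\<Sum>x\<in>{int (max 1 (i-k))..int (i - 1)}. G k U x)"
    by (rule sum.mono_neutral_right) (auto simp: G_nonpos)
  also have "\<dots> = (\<Sum>m\<in>{max 1 (i-k)..i-1}. G k U (int m))"
    by (simp add: image_int_atLeastAtMost[symmetric] sum.reindex)
  finally show ?thesis .
qed

lemma S_step: "S k (x + 1) = S k x + F k (x + 1)"
proof (cases "x \<le> 0")
  case True
  thus ?thesis
    by (cases "x = 0") (auto simp: S_def F_nonpos)
next
  case False
  hence "{1..x+1} = insert (x+1) {1..x}" by auto
  thus ?thesis using False by (simp add: S_def add.commute)
qed

lemma sumF: "c \<ge> 0 \<Longrightarrow> (\<Sum>i\<in>{1..t}. F k (int i - c)) = S k (int t - c)"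
proof (induction t)
  case 0
  thus ?case by (simp add: S_def)
next
  case (Suc t)
  have "S k (int (Suc t) - c) = S k ((int t - c) + 1)" by (simp add: algebra_simps)
  also have "\<dots> = S k (int t - c) + F k (int t - c + 1)" by (rule S_step)
  finally show ?case using Suc by (simp add: algebra_simps)
qed

theorem mainTheorem3:
  fixes U k :: nat and n :: "nat \<Rightarrow> nat"
  assumes "U \<ge> 1" and "k \<ge> U" and "U dvd k"
    and "n 0 = 1"
    and "\<And>i. 1 \<le> i \<Longrightarrow> i \<le> U \<Longrightarrow> n i = (\<Sum>m\<in>{0..i-1}. n m)"
    and "\<And>i. U < i \<Longrightarrow> i \<le> k \<Longrightarrow> n i = (\<Sum>m\<in>{1..i-1}. n m)"
    and "\<And>i. k < i \<Longrightarrow> n i = (\<Sum>m\<in>{i-k..i-1}. n m)"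
  shows "(\<forall>i::nat. 1 \<le> i \<longrightarrow> n i = (\<Sum>j\<in>{1..int U}. F k (int i - j + 1)))
       \<and> (\<forall>t::nat. (\<Sum>i\<in>{1..t}. n i) = (\<Sum>j\<in>{1..int U}. S k (int t - j + 1))
                  \<and> (\<Sum>j\<in>{1..int U}. S k (int t - j + 1)) = Nbar k U (int t))"
proof -
  have main: "1 \<le> i \<Longrightarrow> n i = G k U (int i)" for i
  proof (induction i rule: less_induct)
    case (less i)
    have IH: "(\<Sum>m\<in>{a..i-1}. n m) = (\<Sum>m\<in>{a..i-1}. G k U (int m))" if "a \<ge> 1" for a
      by (rule sum.cong[OF refl]) (use that less in auto)
    have GW: "G k U (int i) = (if i \<le> U then 1 else 0) + (\<Sum>m\<in>{max 1 (i-k)..i-1}. G k U (int m))"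
      using G_rec[of k U "int i"] G_window[OF less.prems, of k U] less.prems by simp
    show ?case
    proof (cases "i \<le> U")
      case True
      have "{0..i-1} = insert 0 {1..i-1}" by auto
      hence "n i = 1 + (\<Sum>m\<in>{1..i-1}. n m)" using assms(4) assms(5)[OF less.prems True] by simp
      moreover have "max 1 (i-k) = 1" using True assms(2) by simp
      ultimately show ?thesis using GW IH[of 1] True by simp
    next
      case False
      show ?thesis
      proof (cases "i \<le> k")
        case True
        have "max 1 (i-k) = 1" using True by simp
        thus ?thesis using GW IH[of 1] False True assms(6)[of i] by simp
      next
        case F2: False
        have "max 1 (i-k) = i - k" using F2 by simp
        thus ?thesis using GW IH[of "i-k"] False F2 assms(7)[of i] by simp
      qed
    qed
  qed
  have part1: "\<forall>i::nat. 1 \<le> i \<longrightarrow> n i = (\<Sum>j\<in>{1..int U}. F k (int i - j + 1))"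
    using main by (simp add: G_def)
  have part2: "(\<Sum>i\<in>{1..t}. n i) = (\<Sum>j\<in>{1..int U}. S k (int t - j + 1))" for t
  proof -
    have "(\<Sum>i\<in>{1..t}. n i) = (\<Sum>i\<in>{1..t}. \<Sum>j\<in>{1..int U}. F k (int i - (j - 1)))"
      by (rule sum.cong[OF refl]) (use part1 in \<open>auto simp: algebra_simps\<close>)
    also have "\<dots> = (\<Sum>j\<in>{1..int U}. \<Sum>i\<in>{1..t}. F k (int i - (j - 1)))" by (rule sum.swap)
    also have "\<dots> = (\<Sum>j\<in>{1..int U}. S k (int t - (j - 1)))"
      by (rule sum.cong[OF refl]) (rule sumF, simp)
    finally show ?thesis by (simp add: algebra_simps)
  qed
  show ?thesis using part1 part2 by (simp add: Nbar_def)
qed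

end
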